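(* Let $\gamma\geq0$, $G=(V,E,\omega)\in\mathcal C_\gamma$, and let $w:[0,\infty)\to\mathcal V$ be the solution of $\frac{dw}{dt}=-Lw$, $w(0)=w_0\in\mathcal V$. Let $c_1,c_2\in\mathbb R$ be such that $c_1\leq(w_0)_i\leq c_2$ for all $i\in V$. Then $c_1\leq w_i(t)\leq c_2$ for all $t\geq0$ and $i\in V$. In particular, $\|w(t)\|_{\mathcal V,\infty}\leq\|w_0\|_{\mathcal V,\infty}$ for all $t\geq0$.
   Context: $\mathcal{G}$ is the set of finite, simple, connected, undirected, edge-weighted graphs $G=(V,E,\omega)$ with $V=\{1,\dots,n\}$, $n\geq2$, weights $\omega_{ij}=\omega_{ji}>0$ on edges, $0$ otherwise. $d_i=\sum_j\omega_{ij}$. $\mathcal V$: functions $V\to\mathbb R$; $\|u\|_{\mathcal V,\infty}=\max_i|u_i|$. Fixed $r\in[0,1]$: $(\Delta u)_i=d_i^{-r}\sum_j\omega_{ij}(u_i-u_j)$, $\mathcal M(u)=\sum_id_i^ru_i$, $\mathrm{vol}(V)=\sum_id_i^r$, $\mathcal A(u)=\frac{\mathcal M(u)}{\mathrm{vol}(V)}\chi_V$. For $u\in\mathcal V$ let $\varphi$ be the unique solution of $\Delta\varphi=u-\mathcal A(u)$, $\mathcal M(\varphi)=0$, and $Lu:=\Delta u+\gamma\varphi$. Equilibrium measure $\nu^S$ ($S\subsetneq V$): unique $\nu$ with $(\Delta\nu)_i=1$ on $S$, $\nu=0$ off $S$. $f^j:=\nu^{V\setminus\{j\}}-\mathcal A(\nu^{V\setminus\{j\}})$.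 $\mathcal C^0=\{G\in\mathcal G:\forall j\ \forall i\neq j:\ \omega_{ij}>0\text{ or }f^j_i\geq0\}$; for $\gamma>0$, $\mathcal C_\gamma=\{G\in\mathcal C^0:\forall j\ \forall i\neq j:\ \omega_{ij}=0\text{ or }d_i^{-r}\omega_{ij}+\gamma\frac{d_j^r}{\mathrm{vol}(V)}f^j_i>0\}$; $\mathcal C_0:=\mathcal G$. *)

theory Defs
  imports "HOL-Analysis.Analysis"
begin

definition Vset :: "nat \<Rightarrow> nat set" where
  "Vset n = {1..n}"

definition is_graph :: "nat \<Rightarrow> (nat \<Rightarrow> nat \<Rightarrow> real) \<Rightarrow> bool" where
  "is_graph n \<omega> \<longleftrightarrow> n \<ge> 2
     \<and> (\<forall>i j. \<omega> i j = \<omega> j i)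
     \<and> (\<forall>i j. \<omega> i j \<ge> 0)
     \<and> (\<forall>i. \<omega> i i = 0)
     \<and> (\<forall>i j. (i \<notin> Vset n \<or> j \<notin> Vset n) \<longrightarrow> \<omega> i j = 0)
     \<and> (\<forall>i\<in>Vset n. \<forall>j\<in>Vset n.
          (\<lambda>a b. a \<in> Vset n \<and> b \<in> Vset n \<and> \<omega> a b > 0)\<^sup>*\<^sup>* i j)"

definition deg :: "nat \<Rightarrow> (nat \<Rightarrow> nat \<Rightarrow> real) \<Rightarrow> nat \<Rightarrow> real" where
  "deg n \<omega> i = (\<Sum>j\<in>Vset n. \<omega> i j)"

definition Lap :: "real \<Rightarrow> nat \<Rightarrow> (nat \<Rightarrow> nat \<Rightarrow> real) \<Rightarrow> (nat \<Rightarrow> real) \<Rightarrow> nat \<Rightarrow> real" where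
  "Lap r n \<omega> u i = deg n \<omega> i powr (-r) * (\<Sum>j\<in>Vset n. \<omega> i j * (u i - u j))"

definition mass :: "real \<Rightarrow> nat \<Rightarrow> (nat \<Rightarrow> nat \<Rightarrow> real) \<Rightarrow> (nat \<Rightarrow> real) \<Rightarrow> real" where
  "mass r n \<omega> u = (\<Sum>i\<in>Vset n. deg n \<omega> i powr r * u i)"

definition vol :: "real \<Rightarrow> nat \<Rightarrow> (nat \<Rightarrow> nat \<Rightarrow> real) \<Rightarrow> real" where
  "vol r n \<omega> = (\<Sum>i\<in>Vset n. deg n \<omega> i powr r)"

definition avg :: "real \<Rightarrow> nat \<Rightarrow> (nat \<Rightarrow> nat \<Rightarrow> real) \<Rightarrow> (nat \<Rightarrow> real) \<Rightarrow> nat \<Rightarrow> real" where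
  "avg r n \<omega> u i = (if i \<in> Vset n then mass r n \<omega> u / vol r n \<omega> else 0)"

definition phi :: "real \<Rightarrow> nat \<Rightarrow> (nat \<Rightarrow> nat \<Rightarrow> real) \<Rightarrow> (nat \<Rightarrow> real) \<Rightarrow> nat \<Rightarrow> real" where
  "phi r n \<omega> u = (THE \<phi>. (\<forall>i\<in>Vset n. Lap r n \<omega> \<phi> i = u i - avg r n \<omega> u i)
                         \<and> mass r n \<omega> \<phi> = 0 \<and> (\<forall>i. i \<notin> Vset n \<longrightarrow> \<phi> i = 0))"

definition Lop :: "real \<Rightarrow> real \<Rightarrow> nat \<Rightarrow> (nat \<Rightarrow> nat \<Rightarrow> real) \<Rightarrow> (nat \<Rightarrow> real) \<Rightarrow> nat \<Rightarrow> real" where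
  "Lop r \<gamma> n \<omega> u i = Lap r n \<omega> u i + \<gamma> * phi r n \<omega> u i"

definition eqmeas :: "real \<Rightarrow> nat \<Rightarrow> (nat \<Rightarrow> nat \<Rightarrow> real) \<Rightarrow> nat set \<Rightarrow> nat \<Rightarrow> real" where
  "eqmeas r n \<omega> S = (THE \<nu>. (\<forall>i\<in>S. Lap r n \<omega> \<nu> i = 1) \<and> (\<forall>i. i \<notin> S \<longrightarrow> \<nu> i = 0))"

definition fvec :: "real \<Rightarrow> nat \<Rightarrow> (nat \<Rightarrow> nat \<Rightarrow> real) \<Rightarrow> nat \<Rightarrow> nat \<Rightarrow> real" where
  "fvec r n \<omega> j i = eqmeas r n \<omega> (Vset n - {j}) i - avg r n \<omega> (eqmeas r n \<omega> (Vset n - {j})) i"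

definition classC0 :: "real \<Rightarrow> nat \<Rightarrow> (nat \<Rightarrow> nat \<Rightarrow> real) \<Rightarrow> bool" where
  "classC0 r n \<omega> \<longleftrightarrow> is_graph n \<omega> \<and>
     (\<forall>j\<in>Vset n. \<forall>i\<in>Vset n. i \<noteq> j \<longrightarrow> \<omega> i j > 0 \<or> fvec r n \<omega> j i \<ge> 0)"

definition classC :: "real \<Rightarrow> real \<Rightarrow> nat \<Rightarrow> (nat \<Rightarrow> nat \<Rightarrow> real) \<Rightarrow> bool" where
  "classC r \<gamma> n \<omega> \<longleftrightarrow> (if \<gamma> = 0 then is_graph n \<omega> else
     classC0 r n \<omega> \<and>
     (\<forall>j\<in>Vset n. \<forall>i\<in>Vset n. i \<noteq> j \<longrightarrow> \<omega> i j = 0 \<or>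
        deg n \<omega> i powr (-r) * \<omega> i j + \<gamma> * deg n \<omega> j powr r / vol r n \<omega> * fvec r n \<omega> j i > 0))"

definition supnorm :: "nat \<Rightarrow> (nat \<Rightarrow> real) \<Rightarrow> real" where
  "supnorm n u = Max ((\<lambda>i. \<bar>u i\<bar>) ` Vset n)"

end

theory Submission
  imports Defs "Jordan_Normal_Form.Determinant"
begin

locale wgraph =
  fixes n :: nat and \<omega> :: "nat \<Rightarrow> nat \<Rightarrow> real" and r :: real
  assumes G: "is_graph n \<omega>"
begin

lemma finV: "finite (Vset n)" by (simp add: Vset_def)

lemma n2: "n \<ge> 2" using G by (simp add: is_graph_def)

lemma Vne: "Vset n \<noteq> {}" using n2 by (auto simp: Vset_def)

lemma wsym: "\<omega> i j = \<omega> j i" using G by (simp add: is_graph_def)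
lemma wnn: "\<omega> i j \<ge> 0" using G by (simp add: is_graph_def)
lemma wout: "i \<notin> Vset n \<or> j \<notin> Vset n \<Longrightarrow> \<omega> i j = 0" using G by (simp add: is_graph_def)
lemma conn: "i \<in> Vset n \<Longrightarrow> j \<in> Vset n \<Longrightarrow>
   (\<lambda>a b. a \<in> Vset n \<and> b \<in> Vset n \<and> \<omega> a b > 0)\<^sup>*\<^sup>* i j"
  using G unfolding is_graph_def by blast

lemma deg_pos: assumes i: "i \<in> Vset n" shows "deg n \<omega> i > 0"
proof -
  obtain k where k: "k \<in> Vset n" "k \<noteq> i"
  proof (cases "i = 1")
    case True then show ?thesis using that[of 2] n2 by (auto simp: Vset_def)
  next
    case False then show ?thesis using that[of 1] n2 by (auto simp: Vset_def)
  qed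
  from conn[OF i k(1)] k(2) obtain a where a: "a \<in> Vset n" "\<omega> i a > 0"
    by (metis (no_types, lifting) converse_rtranclpE)
  have "\<omega> i a \<le> deg n \<omega> i" unfolding deg_def
    by (rule member_le_sum[OF a(1)]) (auto simp: wnn finV)
  with a show ?thesis by linarith
qed

lemma vol_pos: "vol r n \<omega> > 0"
proof -
  have "\<forall>i\<in>Vset n. deg n \<omega> i powr r > 0" using deg_pos by (metis less_irrefl powr_gt_zero)
  then show ?thesis unfolding vol_def using Vne finV by (intro sum_pos) auto
qed

lemma closure_all:
  assumes Z: "Z \<subseteq> Vset n" "z \<in> Z"
    and cl: "\<And>a b. a \<in> Z \<Longrightarrow> b \<in> Vset n \<Longrightarrow> \<omega> a b > 0 \<Longrightarrow> b \<in> Z"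
    and k: "k \<in> Vset n"
  shows "k \<in> Z"
proof -
  have "(\<lambda>a b. a \<in> Vset n \<and> b \<in> Vset n \<and> \<omega> a b > 0)\<^sup>*\<^sup>* z k"
    using conn Z k by blast
  then show ?thesis
    by (induction rule: rtranclp_induct) (use Z cl in auto)
qed

lemma Lap_alt: "Lap r n \<omega> u i = deg n \<omega> i powr (-r) * (\<Sum>j\<in>Vset n. \<omega> i j * (u i - u j))"
  by (simp add: Lap_def)

lemma dpow_pos: "i \<in> Vset n \<Longrightarrow> deg n \<omega> i powr (-r) > 0"
  using deg_pos by (metis less_irrefl powr_gt_zero)

lemma max_prop:
  assumes i: "i \<in> Vset n" and L: "Lap r n \<omega> u i \<le> 0" and mx: "\<And>j. j \<in> Vset n \<Longrightarrow> u j \<le> u i"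
    and j: "j \<in> Vset n" "\<omega> i j > 0"
  shows "u j = u i"
proof -
  define X where "X = (\<Sum>j\<in>Vset n. \<omega> i j * (u i - u j))"
  have LX: "deg n \<omega> i powr (-r) * X \<le> 0" using L unfolding Lap_def X_def .
  have S: "X \<le> 0"
  proof (rule ccontr)
    assume "\<not> X \<le> 0"
    then have "deg n \<omega> i powr (-r) * X > 0" using dpow_pos[OF i] by (intro mult_pos_pos) auto
    with LX show False by linarith
  qed
  have nn: "\<omega> i k * (u i - u k) \<ge> 0" if "k \<in> Vset n" for k
    using mx[OF that] wnn[of i k] by (intro mult_nonneg_nonneg) auto
  have "X \<ge> 0" unfolding X_def by (rule sum_nonneg) (rule nn)
  hence X0: "X = 0" using S by linarith
  have "\<forall>k\<in>Vset n. \<omega> i k * (u i - u k) = 0"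
    using sum_nonneg_eq_0_iff[OF finV, of "\<lambda>k. \<omega> i k * (u i - u k)"] nn X0 unfolding X_def by blast
  then have "\<omega> i j * (u i - u j) = 0" using j(1) by blast
  with j show ?thesis by auto
qed

lemma Lap_neg: "Lap r n \<omega> (\<lambda>k. - u k) i = - Lap r n \<omega> u i"
proof -
  have "(\<Sum>j\<in>Vset n. \<omega> i j * (- u i - - u j)) = - (\<Sum>j\<in>Vset n. \<omega> i j * (u i - u j))"
    unfolding sum_negf[symmetric] by (rule sum.cong) (auto simp: algebra_simps)
  then show ?thesis unfolding Lap_def by simp
qed

lemma harm_const:
  assumes H: "\<And>i. i \<in> Vset n \<Longrightarrow> Lap r n \<omega> u i = 0" and i: "i \<in> Vset n" and j: "j \<in> Vset n"
  shows "u i = u j"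
proof -
  define M where "M = Max (u ` Vset n)"
  have "M \<in> u ` Vset n" unfolding M_def using Max_in[of "u ` Vset n"] finV Vne by auto
  then obtain z where z: "z \<in> Vset n" "u z = M" by auto
  have le: "\<And>k. k \<in> Vset n \<Longrightarrow> u k \<le> M" unfolding M_def using finV by auto
  have cl: "b \<in> {k\<in>Vset n. u k = M}" if "a \<in> {k\<in>Vset n. u k = M}" "b \<in> Vset n" "\<omega> a b > 0" for a b
  proof -
    have a: "a \<in> Vset n" "u a = M" using that by auto
    have "u b = u a"
      by (rule max_prop[OF a(1) _ _ that(2,3)]) (use H a le in auto)
    then show ?thesis using a that by auto
  qed
  have zz: "z \<in> {k\<in>Vset n. u k = M}" using z by simp
  have "k \<in> {k\<in>Vset n. u k = M}" if "k \<in> Vset n" for k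
    by (rule closure_all[of "{k\<in>Vset n. u k = M}" z, OF _ zz cl that]) auto
  with i j show ?thesis by auto
qed

lemma dir_le:
  assumes j: "j \<in> Vset n" and H: "\<And>i. i \<in> Vset n \<Longrightarrow> i \<noteq> j \<Longrightarrow> Lap r n \<omega> u i = 0"
    and u0: "u j = 0" and i: "i \<in> Vset n"
  shows "u i \<le> 0"
proof -
  define M where "M = Max (u ` Vset n)"
  have "M \<in> u ` Vset n" unfolding M_def using Max_in[of "u ` Vset n"] finV Vne by auto
  then obtain z where z: "z \<in> Vset n" "u z = M" by auto
  have le: "\<And>k. k \<in> Vset n \<Longrightarrow> u k \<le> M" unfolding M_def using finV by auto
  show ?thesis
  proof (rule ccontr)
    assume "\<not> u i \<le> 0"
    hence Mp: "M > 0" using le[OF i] by simp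
    have cl: "b \<in> {k\<in>Vset n. u k = M}" if "a \<in> {k\<in>Vset n. u k = M}" "b \<in> Vset n" "\<omega> a b > 0" for a b
    proof -
      have a: "a \<in> Vset n" "u a = M" using that by auto
      have "a \<noteq> j" using a u0 Mp by auto
      have L0: "Lap r n \<omega> u a \<le> 0" using H[OF a(1) \<open>a \<noteq> j\<close>] by simp
      have "\<And>k. k \<in> Vset n \<Longrightarrow> u k \<le> u a" using le a(2) by simp
      then have "u b = u a" using max_prop[OF a(1) L0 _ that(2,3)] by blast
      then show ?thesis using a that by auto
    qed
    have zz: "z \<in> {k\<in>Vset n. u k = M}" using z by simp
    have "j \<in> {k\<in>Vset n. u k = M}"
      by (rule closure_all[of "{k\<in>Vset n. u k = M}" z, OF _ zz cl j]) auto
    hence "u j = M" by simp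
    with u0 Mp show False by simp
  qed
qed

lemma dir_zero:
  assumes j: "j \<in> Vset n" and H: "\<And>i. i \<in> Vset n \<Longrightarrow> i \<noteq> j \<Longrightarrow> Lap r n \<omega> u i = 0"
    and u0: "u j = 0" and i: "i \<in> Vset n"
  shows "u i = 0"
proof -
  have "u i \<le> 0" by (rule dir_le[OF j H u0 i])
  have h2: "\<And>i. i \<in> Vset n \<Longrightarrow> i \<noteq> j \<Longrightarrow> Lap r n \<omega> (\<lambda>k. - u k) i = 0"
    using H by (simp add: Lap_neg)
  have h3: "(\<lambda>k. - u k) j = 0" using u0 by simp
  have "(\<lambda>k. - u k) i \<le> 0" by (rule dir_le[OF j h2 h3 i])
  moreover note \<open>u i \<le> 0\<close>
  ultimately show ?thesis by simp
qed

end

context wgraph begin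

lemma Lap_lin2: "Lap r n \<omega> (\<lambda>k. a * u k + v k) i = a * Lap r n \<omega> u i + Lap r n \<omega> v i"
proof -
  have "(\<Sum>j\<in>Vset n. \<omega> i j * ((a * u i + v i) - (a * u j + v j)))
      = a * (\<Sum>j\<in>Vset n. \<omega> i j * (u i - u j)) + (\<Sum>j\<in>Vset n. \<omega> i j * (v i - v j))"
    unfolding sum_distrib_left sum.distrib[symmetric] by (rule sum.cong) (auto simp: algebra_simps)
  then show ?thesis unfolding Lap_def by (simp add: algebra_simps)
qed

lemma Lap_zero: "Lap r n \<omega> (\<lambda>k. 0) i = 0" unfolding Lap_def by simp

lemma Lap_sum: "finite J \<Longrightarrow> Lap r n \<omega> (\<lambda>k. \<Sum>j\<in>J. c j * g j k) i = (\<Sum>j\<in>J. c j * Lap r n \<omega> (g j) i)"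
proof (induction J rule: finite_induct)
  case empty then show ?case by (simp add: Lap_zero)
next
  case (insert x F)
  have "Lap r n \<omega> (\<lambda>k. \<Sum>j\<in>insert x F. c j * g j k) i = Lap r n \<omega> (\<lambda>k. c x * g x k + (\<Sum>j\<in>F. c j * g j k)) i"
    using insert by simp
  also have "\<dots> = c x * Lap r n \<omega> (g x) i + Lap r n \<omega> (\<lambda>k. \<Sum>j\<in>F. c j * g j k) i" by (rule Lap_lin2)
  finally show ?case using insert by simp
qed

lemma Lap_cong: assumes "\<And>k. k \<in> Vset n \<Longrightarrow> u k = v k + c" "i \<in> Vset n"
  shows "Lap r n \<omega> u i = Lap r n \<omega> v i"
proof -
  have "(\<Sum>j\<in>Vset n. \<omega> i j * (u i - u j)) = (\<Sum>j\<in>Vset n. \<omega> i j * (v i - v j))"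
    by (rule sum.cong) (use assms in auto)
  then show ?thesis unfolding Lap_def by simp
qed

lemma dpow_inv: "k \<in> Vset n \<Longrightarrow> deg n \<omega> k powr r * deg n \<omega> k powr (-r) = 1"
  using deg_pos[of k] by (simp add: powr_minus)

lemma dpowr_pos: "k \<in> Vset n \<Longrightarrow> deg n \<omega> k powr r > 0"
  using deg_pos by (metis less_irrefl powr_gt_zero)

lemma mass_Lap: "(\<Sum>k\<in>Vset n. deg n \<omega> k powr r * Lap r n \<omega> u k) = 0"
proof -
  have "(\<Sum>k\<in>Vset n. deg n \<omega> k powr r * Lap r n \<omega> u k) = (\<Sum>k\<in>Vset n. \<Sum>j\<in>Vset n. \<omega> k j * (u k - u j))"
  proof (rule sum.cong)
    fix k assume k: "k \<in> Vset n"
    show "deg n \<omega> k powr r * Lap r n \<omega> u k = (\<Sum>j\<in>Vset n. \<omega> k j * (u k - u j))"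
      unfolding Lap_def mult.assoc[symmetric] dpow_inv[OF k] by simp
  qed simp
  also have "\<dots> = (\<Sum>k\<in>Vset n. \<Sum>j\<in>Vset n. \<omega> k j * u k) - (\<Sum>k\<in>Vset n. \<Sum>j\<in>Vset n. \<omega> k j * u j)"
    by (simp add: sum_subtractf right_diff_distrib)
  also have "(\<Sum>k\<in>Vset n. \<Sum>j\<in>Vset n. \<omega> k j * u j) = (\<Sum>j\<in>Vset n. \<Sum>k\<in>Vset n. \<omega> k j * u j)"
    by (rule sum.swap)
  also have "\<dots> = (\<Sum>j\<in>Vset n. \<Sum>k\<in>Vset n. \<omega> j k * u j)" by (simp add: wsym)
  finally show ?thesis by simp
qed

lemma eqmeas_char:
  assumes j: "j \<in> Vset n" and nu: "\<forall>i\<in>Vset n - {j}. Lap r n \<omega> \<nu> i = 1" "\<forall>i. i \<notin> Vset n - {j} \<longrightarrow> \<nu> i = 0"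
  shows "eqmeas r n \<omega> (Vset n - {j}) = \<nu>"
  unfolding eqmeas_def
proof (rule the_equality)
  show "(\<forall>i\<in>Vset n - {j}. Lap r n \<omega> \<nu> i = 1) \<and> (\<forall>i. i \<notin> Vset n - {j} \<longrightarrow> \<nu> i = 0)" using nu by blast
next
  fix \<mu> assume mu: "(\<forall>i\<in>Vset n - {j}. Lap r n \<omega> \<mu> i = 1) \<and> (\<forall>i. i \<notin> Vset n - {j} \<longrightarrow> \<mu> i = 0)"
  define d where "d = (\<lambda>k. (-1) * \<nu> k + \<mu> k)"
  have H: "Lap r n \<omega> d i = 0" if "i \<in> Vset n" "i \<noteq> j" for i
    unfolding d_def Lap_lin2 using mu nu that by simp
  have d0: "d j = 0" unfolding d_def using mu nu by simp
  show "\<mu> = \<nu>"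
  proof
    fix k show "\<mu> k = \<nu> k"
    proof (cases "k \<in> Vset n - {j}")
      case True
      then have "d k = 0" using dir_zero[OF j H d0] by blast
      then show ?thesis unfolding d_def by simp
    next
      case False then show ?thesis using mu nu by simp
    qed
  qed
qed

lemma eqmeas_Lapj:
  assumes j: "j \<in> Vset n" and nu: "\<forall>i\<in>Vset n - {j}. Lap r n \<omega> \<nu> i = 1"
  shows "deg n \<omega> j powr r * Lap r n \<omega> \<nu> j = deg n \<omega> j powr r - vol r n \<omega>"
proof -
  have "0 = (\<Sum>k\<in>Vset n. deg n \<omega> k powr r * Lap r n \<omega> \<nu> k)" using mass_Lap by simp
  also have "\<dots> = deg n \<omega> j powr r * Lap r n \<omega> \<nu> j + (\<Sum>k\<in>Vset n - {j}. deg n \<omega> k powr r * Lap r n \<omega> \<nu> k)"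
    by (rule sum.remove[OF finV j])
  also have "(\<Sum>k\<in>Vset n - {j}. deg n \<omega> k powr r * Lap r n \<omega> \<nu> k) = (\<Sum>k\<in>Vset n - {j}. deg n \<omega> k powr r)"
    using nu by simp
  finally have A: "0 = deg n \<omega> j powr r * Lap r n \<omega> \<nu> j + (\<Sum>k\<in>Vset n - {j}. deg n \<omega> k powr r)" .
  have "vol r n \<omega> = deg n \<omega> j powr r + (\<Sum>k\<in>Vset n - {j}. deg n \<omega> k powr r)"
    unfolding vol_def by (rule sum.remove[OF finV j])
  with A show ?thesis by linarith
qed

lemma mass_sum: "mass r n \<omega> (\<lambda>k. \<Sum>j\<in>J. c j * g j k) = (\<Sum>j\<in>J. c j * mass r n \<omega> (g j))"
proof -
  have "mass r n \<omega> (\<lambda>k. \<Sum>j\<in>J. c j * g j k) = (\<Sum>i\<in>Vset n. \<Sum>j\<in>J. c j * (deg n \<omega> i powr r * g j i))"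
    unfolding mass_def sum_distrib_left by (simp add: mult.left_commute)
  also have "\<dots> = (\<Sum>j\<in>J. \<Sum>i\<in>Vset n. c j * (deg n \<omega> i powr r * g j i))" by (rule sum.swap)
  also have "\<dots> = (\<Sum>j\<in>J. c j * mass r n \<omega> (g j))" unfolding mass_def sum_distrib_left by simp
  finally show ?thesis .
qed

lemma phi_char:
  assumes psi: "\<forall>i\<in>Vset n. Lap r n \<omega> \<psi> i = u i - avg r n \<omega> u i" "mass r n \<omega> \<psi> = 0" "\<forall>i. i \<notin> Vset n \<longrightarrow> \<psi> i = 0"
  shows "phi r n \<omega> u = \<psi>"
  unfolding phi_def
proof (rule the_equality)
  show "(\<forall>i\<in>Vset n. Lap r n \<omega> \<psi> i = u i - avg r n \<omega> u i) \<and> mass r n \<omega> \<psi> = 0 \<and> (\<forall>i. i \<notin> Vset n \<longrightarrow> \<psi> i = 0)"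
    using psi by blast
next
  fix \<mu> assume mu: "(\<forall>i\<in>Vset n. Lap r n \<omega> \<mu> i = u i - avg r n \<omega> u i) \<and> mass r n \<omega> \<mu> = 0 \<and> (\<forall>i. i \<notin> Vset n \<longrightarrow> \<mu> i = 0)"
  define d where "d = (\<lambda>k. (-1) * \<psi> k + \<mu> k)"
  have H: "Lap r n \<omega> d i = 0" if "i \<in> Vset n" for i
    unfolding d_def Lap_lin2 using mu psi that by simp
  obtain z where z: "z \<in> Vset n" using Vne by blast
  have dc: "d k = d z" if "k \<in> Vset n" for k using harm_const[OF H that z] by blast
  have "mass r n \<omega> d = (-1) * mass r n \<omega> \<psi> + mass r n \<omega> \<mu>"
    unfolding mass_def d_def sum_distrib_left sum.distrib[symmetric] by (rule sum.cong) (auto simp: algebra_simps)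
  then have m0: "mass r n \<omega> d = 0" using mu psi by simp
  have "mass r n \<omega> d = d z * vol r n \<omega>"
    unfolding mass_def vol_def sum_distrib_left using dc by (auto intro!: sum.cong)
  with m0 vol_pos have "d z = 0" by simp
  show "\<mu> = \<psi>"
  proof
    fix k show "\<mu> k = \<psi> k"
    proof (cases "k \<in> Vset n")
      case True
      then have "d k = 0" using dc \<open>d z = 0\<close> by simp
      then show ?thesis unfolding d_def by simp
    next
      case False then show ?thesis using mu psi by simp
    qed
  qed
qed

end

context wgraph begin

lemma sum_shift: "(\<Sum>l\<in>Vset n. f l) = (\<Sum>b\<in>{0..<n}. f (Suc b))"
proof -
  have e: "Vset n = Suc ` {0..<n}" unfolding Vset_def
    by (auto simp: image_iff)
  show ?thesis unfolding e by (subst sum.reindex) auto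
qed

lemma eq_exists:
  assumes j: "j \<in> Vset n"
  shows "\<exists>\<nu>. (\<forall>i\<in>Vset n - {j}. Lap r n \<omega> \<nu> i = 1) \<and> (\<forall>i. i \<notin> Vset n - {j} \<longrightarrow> \<nu> i = 0)"
proof -
  define cf where "cf k l = (if k = j then (if l = k then 1 else 0)
      else deg n \<omega> k powr (-r) * ((if l = k then deg n \<omega> k else 0) - \<omega> k l))" for k l
  define A :: "real mat" where "A = Matrix.mat n n (\<lambda>(a,b). cf (Suc a) (Suc b))"
  define tov :: "real vec \<Rightarrow> nat \<Rightarrow> real" where "tov v = (\<lambda>k. if k \<in> Vset n then v $ (k - 1) else 0)" for v
  have Ac: "A \<in> carrier_mat n n" unfolding A_def by simp
  have key: "(A *\<^sub>v v) $ a = (if Suc a = j then tov v j else Lap r n \<omega> (tov v) (Suc a))"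
    if v: "v \<in> carrier_vec n" and a: "a < n" for v a
  proof -
    have "(A *\<^sub>v v) $ a = (\<Sum>b\<in>{0..<n}. cf (Suc a) (Suc b) * v $ b)"
      using v a unfolding A_def by (simp add: scalar_prod_def)
    also have "\<dots> = (\<Sum>l\<in>Vset n. cf (Suc a) l * tov v l)"
      unfolding sum_shift tov_def by (rule sum.cong) (auto simp: Vset_def)
    finally have E: "(A *\<^sub>v v) $ a = (\<Sum>l\<in>Vset n. cf (Suc a) l * tov v l)" .
    have ka: "Suc a \<in> Vset n" using a by (simp add: Vset_def)
    show ?thesis
    proof (cases "Suc a = j")
      case True
      have "(\<Sum>l\<in>Vset n. cf (Suc a) l * tov v l) = (\<Sum>l\<in>Vset n. if l = j then tov v l else 0)"
        by (rule sum.cong) (auto simp: cf_def True)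
      also have "\<dots> = tov v j" using j finV by simp
      finally show ?thesis using E True by simp
    next
      case False
      let ?k = "Suc a"
      have "(\<Sum>l\<in>Vset n. cf ?k l * tov v l)
          = deg n \<omega> ?k powr (-r) * (\<Sum>l\<in>Vset n. (if l = ?k then deg n \<omega> ?k * tov v l else 0) - \<omega> ?k l * tov v l)"
        unfolding sum_distrib_left by (rule sum.cong) (auto simp: cf_def False algebra_simps)
      also have "\<dots> = deg n \<omega> ?k powr (-r) * (deg n \<omega> ?k * tov v ?k - (\<Sum>l\<in>Vset n. \<omega> ?k l * tov v l))"
        using ka finV by (simp add: sum_subtractf)
      also have "\<dots> = Lap r n \<omega> (tov v) ?k"
      proof -
        have "(\<Sum>l\<in>Vset n. \<omega> ?k l * (tov v ?k - tov v l)) = deg n \<omega> ?k * tov v ?k - (\<Sum>l\<in>Vset n. \<omega> ?k l * tov v l)"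
          unfolding deg_def by (simp add: right_diff_distrib sum_subtractf sum_distrib_right)
        then show ?thesis unfolding Lap_def by simp
      qed
      finally show ?thesis using E False by simp
    qed
  qed
  have "det A \<noteq> 0"
  proof
    assume "det A = 0"
    then obtain v where v: "v \<in> carrier_vec n" "v \<noteq> 0\<^sub>v n" "A *\<^sub>v v = 0\<^sub>v n"
      using det_0_iff_vec_prod_zero_field[OF Ac] by blast
    have jn: "j - 1 < n" "Suc (j - 1) = j" using j by (auto simp: Vset_def)
    have t0: "tov v j = 0" using key[OF v(1) jn(1)] v(3) jn by simp
    have H: "Lap r n \<omega> (tov v) i = 0" if "i \<in> Vset n" "i \<noteq> j" for i
    proof -
      have "i - 1 < n" "Suc (i - 1) = i" using that by (auto simp: Vset_def)
      then show ?thesis using key[OF v(1), of "i - 1"] v(3) that by simp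
    qed
    have "v = 0\<^sub>v n"
    proof (rule eq_vecI)
      fix b assume "b < dim_vec (0\<^sub>v n :: real vec)"
      then have b: "b < n" by simp
      have "Suc b \<in> Vset n" using b by (simp add: Vset_def)
      then have "tov v (Suc b) = 0" using dir_zero[OF j H t0] by blast
      then show "v $ b = 0\<^sub>v n $ b" using b by (simp add: tov_def Vset_def)
    next
      show "dim_vec v = dim_vec (0\<^sub>v n :: real vec)" using v(1) by simp
    qed
    with v(2) show False by simp
  qed
  from det_non_zero_imp_unit[OF Ac this, of "()"]
  obtain B where B: "B \<in> carrier_mat n n" "A * B = 1\<^sub>m n"
    unfolding Units_def ring_mat_def by auto
  define b0 :: "real vec" where "b0 = Matrix.vec n (\<lambda>a. if Suc a = j then 0 else 1)"
  define v where "v = B *\<^sub>v b0"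
  have vc: "v \<in> carrier_vec n" unfolding v_def by (rule mult_mat_vec_carrier[OF B(1)]) (simp add: b0_def)
  have b0c: "b0 \<in> carrier_vec n" by (simp add: b0_def)
  have Av: "A *\<^sub>v v = b0" unfolding v_def
    using assoc_mult_mat_vec[OF Ac B(1) b0c] B(2) one_mult_mat_vec[OF b0c] by simp
  show ?thesis
  proof (intro exI conjI allI ballI impI)
    fix i assume i: "i \<in> Vset n - {j}"
    have "i - 1 < n" "Suc (i - 1) = i" using i by (auto simp: Vset_def)
    then show "Lap r n \<omega> (tov v) i = 1" using key[OF vc, of "i - 1"] Av i by (simp add: b0_def)
  next
    fix i assume i: "i \<notin> Vset n - {j}"
    show "tov v i = 0"
    proof (cases "i = j")
      case True
      have "j - 1 < n" "Suc (j - 1) = j" using j by (auto simp: Vset_def)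
      then show ?thesis using key[OF vc, of "j - 1"] Av True by (simp add: b0_def)
    next
      case False then show ?thesis using i by (simp add: tov_def)
    qed
  qed
qed

end

lemma aux_if: "- (x - c) * (a - (if b then 1 else 0)) = c * a - x * a + (if b then x - c else (0::real))"
  by (cases b) (simp_all add: algebra_simps)

context wgraph begin

lemma nu_props:
  assumes j: "j \<in> Vset n"
  shows "\<forall>i\<in>Vset n - {j}. Lap r n \<omega> (eqmeas r n \<omega> (Vset n - {j})) i = 1"
    "\<forall>i. i \<notin> Vset n - {j} \<longrightarrow> eqmeas r n \<omega> (Vset n - {j}) i = 0"
proof -
  obtain \<nu> where nu: "\<forall>i\<in>Vset n - {j}. Lap r n \<omega> \<nu> i = 1" "\<forall>i. i \<notin> Vset n - {j} \<longrightarrow> \<nu> i = 0"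
    using eq_exists[OF j] by blast
  have e: "eqmeas r n \<omega> (Vset n - {j}) = \<nu>" by (rule eqmeas_char[OF j nu])
  show "\<forall>i\<in>Vset n - {j}. Lap r n \<omega> (eqmeas r n \<omega> (Vset n - {j})) i = 1"
    "\<forall>i. i \<notin> Vset n - {j} \<longrightarrow> eqmeas r n \<omega> (Vset n - {j}) i = 0" unfolding e using nu by auto
qed

lemma fvec_out: "j \<in> Vset n \<Longrightarrow> i \<notin> Vset n \<Longrightarrow> fvec r n \<omega> j i = 0"
  unfolding fvec_def avg_def using nu_props(2)[of j] by simp

lemma Lap_fvec: assumes j: "j \<in> Vset n" and k: "k \<in> Vset n"
  shows "Lap r n \<omega> (fvec r n \<omega> j) k = Lap r n \<omega> (eqmeas r n \<omega> (Vset n - {j})) k"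
  by (rule Lap_cong[OF _ k, of _ _ "- (mass r n \<omega> (eqmeas r n \<omega> (Vset n - {j})) / vol r n \<omega>)"])
     (simp add: fvec_def avg_def)

lemma mass_fvec: assumes j: "j \<in> Vset n" shows "mass r n \<omega> (fvec r n \<omega> j) = 0"
proof -
  let ?nu = "eqmeas r n \<omega> (Vset n - {j})"
  have "mass r n \<omega> (fvec r n \<omega> j) = (\<Sum>i\<in>Vset n. deg n \<omega> i powr r * ?nu i - deg n \<omega> i powr r * (mass r n \<omega> ?nu / vol r n \<omega>))"
    unfolding mass_def fvec_def avg_def by (rule sum.cong) (auto simp: right_diff_distrib)
  also have "\<dots> = mass r n \<omega> ?nu - vol r n \<omega> * (mass r n \<omega> ?nu / vol r n \<omega>)"
    unfolding sum_subtractf mass_def vol_def sum_distrib_right by simp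
  also have "\<dots> = 0" using vol_pos by simp
  finally show ?thesis .
qed

lemma Lap_fvec_val: assumes j: "j \<in> Vset n" and k: "k \<in> Vset n"
  shows "deg n \<omega> j powr r / vol r n \<omega> * Lap r n \<omega> (fvec r n \<omega> j) k
       = deg n \<omega> j powr r / vol r n \<omega> - (if k = j then 1 else 0)"
proof (cases "k = j")
  case True
  have "deg n \<omega> j powr r * Lap r n \<omega> (eqmeas r n \<omega> (Vset n - {j})) j = deg n \<omega> j powr r - vol r n \<omega>"
    by (rule eqmeas_Lapj[OF j nu_props(1)[OF j]])
  then show ?thesis unfolding Lap_fvec[OF j k] using True vol_pos
    by (simp add: field_simps)
next
  case False
  then show ?thesis unfolding Lap_fvec[OF j k] using nu_props(1)[OF j] k by simp
qed

lemma phi_formula: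
  "phi r n \<omega> u = (\<lambda>k. \<Sum>j\<in>Vset n. (- (u j - c) * (deg n \<omega> j powr r / vol r n \<omega>)) * fvec r n \<omega> j k)"
proof (rule phi_char)
  let ?a = "\<lambda>j. deg n \<omega> j powr r / vol r n \<omega>"
  have sa: "(\<Sum>j\<in>Vset n. ?a j) = 1" unfolding vol_def sum_divide_distrib[symmetric] using vol_pos
    by (simp add: vol_def)
  have su: "(\<Sum>j\<in>Vset n. u j * ?a j) = mass r n \<omega> u / vol r n \<omega>"
    unfolding mass_def sum_divide_distrib by (rule sum.cong) auto
  show "\<forall>i\<in>Vset n. Lap r n \<omega> (\<lambda>k. \<Sum>j\<in>Vset n. (- (u j - c) * ?a j) * fvec r n \<omega> j k) i = u i - avg r n \<omega> u i"
  proof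
    fix k assume k: "k \<in> Vset n"
    have "Lap r n \<omega> (\<lambda>k. \<Sum>j\<in>Vset n. (- (u j - c) * ?a j) * fvec r n \<omega> j k) k
        = (\<Sum>j\<in>Vset n. (- (u j - c) * ?a j) * Lap r n \<omega> (fvec r n \<omega> j) k)"
      by (rule Lap_sum[OF finV])
    also have "\<dots> = (\<Sum>j\<in>Vset n. (- (u j - c)) * (?a j - (if k = j then 1 else 0)))"
    proof (rule sum.cong)
      fix j assume j: "j \<in> Vset n"
      show "(- (u j - c) * ?a j) * Lap r n \<omega> (fvec r n \<omega> j) k = (- (u j - c)) * (?a j - (if k = j then 1 else 0))"
        using Lap_fvec_val[OF j k] by (simp only: mult.assoc)
    qed simp
    also have "\<dots> = (\<Sum>j\<in>Vset n. c * ?a j - u j * ?a j + (if k = j then u j - c else 0))"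
    proof (rule sum.cong)
      fix j
      show "(- (u j - c)) * (?a j - (if k = j then 1 else 0)) = c * ?a j - u j * ?a j + (if k = j then u j - c else 0)"
        by (rule aux_if)
    qed simp
    also have "\<dots> = c * (\<Sum>j\<in>Vset n. ?a j) - (\<Sum>j\<in>Vset n. u j * ?a j) + (u k - c)"
      unfolding sum.distrib sum_subtractf sum_distrib_left using k finV by (simp add: if_distrib)
    also have "\<dots> = u k - avg r n \<omega> u k" unfolding sa su avg_def using k by simp
    finally show "Lap r n \<omega> (\<lambda>k. \<Sum>j\<in>Vset n. (- (u j - c) * ?a j) * fvec r n \<omega> j k) k = u k - avg r n \<omega> u k" .
  qed
  show "mass r n \<omega> (\<lambda>k. \<Sum>j\<in>Vset n. (- (u j - c) * ?a j) * fvec r n \<omega> j k) = 0"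
    unfolding mass_sum using mass_fvec by simp
  show "\<forall>i. i \<notin> Vset n \<longrightarrow> (\<Sum>j\<in>Vset n. (- (u j - c) * ?a j) * fvec r n \<omega> j i) = 0"
    using fvec_out by simp
qed

lemma Lop_formula:
  assumes i: "i \<in> Vset n"
  shows "Lop r \<gamma> n \<omega> u i = (\<Sum>j\<in>Vset n. (u i - u j) *
     (deg n \<omega> i powr (-r) * \<omega> i j + \<gamma> * deg n \<omega> j powr r / vol r n \<omega> * fvec r n \<omega> j i))"
proof -
  have eq: "Lop r \<gamma> n \<omega> u i = (\<Sum>j\<in>Vset n. (u i - u j) * (deg n \<omega> i powr (-r) * \<omega> i j))
       + (\<Sum>j\<in>Vset n. (u i - u j) * (\<gamma> * deg n \<omega> j powr r / vol r n \<omega> * fvec r n \<omega> j i))"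
  proof -
    have 1: "Lap r n \<omega> u i = (\<Sum>j\<in>Vset n. (u i - u j) * (deg n \<omega> i powr (-r) * \<omega> i j))"
      unfolding Lap_def sum_distrib_left by (rule sum.cong) (auto simp: algebra_simps)
    have 2: "\<gamma> * phi r n \<omega> u i = (\<Sum>j\<in>Vset n. (u i - u j) * (\<gamma> * deg n \<omega> j powr r / vol r n \<omega> * fvec r n \<omega> j i))"
      unfolding phi_formula[of u "u i"] sum_distrib_left by (rule sum.cong) (auto simp: algebra_simps)
    show ?thesis unfolding Lop_def 1 2 ..
  qed
  show ?thesis unfolding eq sum.distrib[symmetric] by (rule sum.cong) (auto simp: algebra_simps)
qed

end

lemma ode_upper_eps:
  fixes w :: "real \<Rightarrow> nat \<Rightarrow> real" and F :: "(nat \<Rightarrow> real) \<Rightarrow> nat \<Rightarrow> real" and V :: "nat set"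
  assumes finV: "finite V"
    and Fmax: "\<And>t i. t \<ge> 0 \<Longrightarrow> i \<in> V \<Longrightarrow> (\<forall>j\<in>V. w t j \<le> w t i) \<Longrightarrow> F (w t) i \<le> 0"
    and der: "\<And>i t. i \<in> V \<Longrightarrow> t \<ge> 0 \<Longrightarrow> ((\<lambda>s. w s i) has_real_derivative F (w t) i) (at t within {0..})"
    and init: "\<And>i. i \<in> V \<Longrightarrow> w 0 i \<le> c"
    and eps: "\<epsilon> > 0"
  shows "\<forall>t\<ge>0. \<forall>i\<in>V. w t i - \<epsilon> * t < c + \<epsilon>"
proof (rule ccontr)
  define h where "h i s = w s i - \<epsilon> * s" for i s
  define bad where "bad s \<longleftrightarrow> (\<exists>i\<in>V. h i s \<ge> c + \<epsilon>)" for s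
  define S where "S = {s. 0 \<le> s \<and> bad s}"
  assume "\<not> (\<forall>t\<ge>0. \<forall>i\<in>V. w t i - \<epsilon> * t < c + \<epsilon>)"
  then obtain t1 i1 where "t1 \<ge> 0" "i1 \<in> V" "\<not> w t1 i1 - \<epsilon> * t1 < c + \<epsilon>" by blast
  then have t1: "t1 \<in> S" unfolding S_def bad_def h_def by (auto simp: not_less)
  have Sne: "S \<noteq> {}" using t1 by blast
  have bdd: "bdd_below S" unfolding S_def by (rule bdd_belowI[of _ 0]) auto
  define T where "T = Inf S"
  have F1: "T \<le> s" if "s \<in> S" for s unfolding T_def by (rule cInf_lower[OF that bdd])
  have T0: "T \<ge> 0" unfolding T_def by (rule cInf_greatest[OF Sne]) (auto simp: S_def)
  have hder: "(h i has_real_derivative (F (w t) i - \<epsilon>)) (at t within {0..})" if "i \<in> V" "t \<ge> 0" for i t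
  proof -
    have e: "h i = (\<lambda>s. w s i - \<epsilon> * s)" by (simp add: h_def fun_eq_iff)
    have a1: "((\<lambda>s. \<epsilon> * s) has_real_derivative \<epsilon>) (at t within {0..})"
      by (rule derivative_eq_intros refl)+ simp
    show ?thesis unfolding e by (rule DERIV_diff[OF der[OF that] a1])
  qed
  have hcont: "(h i \<longlongrightarrow> h i t) (at t within {0..})" if "i \<in> V" "t \<ge> 0" for i t
    using DERIV_continuous[OF hder[OF that]] unfolding continuous_within .
  have ev_lt: "eventually (\<lambda>x. \<forall>i\<in>V. h i x < c + \<epsilon>) (at t within {0..})"
    if "t \<ge> 0" "\<forall>i\<in>V. h i t < c + \<epsilon>" for t
  proof (rule eventually_ball_finite[OF finV], rule ballI)
    fix i assume i: "i \<in> V"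
    show "eventually (\<lambda>x. h i x < c + \<epsilon>) (at t within {0..})"
      by (rule order_tendstoD(2)[OF hcont[OF i that(1)]]) (use that i in blast)
  qed
  have notS_near: "\<exists>d>0. \<forall>x. 0 \<le> x \<and> x \<noteq> t \<and> \<bar>x - t\<bar> < d \<longrightarrow> \<not> bad x"
    if "t \<ge> 0" "\<not> bad t" for t
  proof -
    have "\<forall>i\<in>V. h i t < c + \<epsilon>" using that unfolding bad_def by force
    from ev_lt[OF that(1) this] obtain d where d: "d > 0" "\<forall>x\<in>{0..}. x \<noteq> t \<and> dist x t < d \<longrightarrow> (\<forall>i\<in>V. h i x < c + \<epsilon>)"
      unfolding eventually_at by blast
    show ?thesis
    proof (intro exI[of _ d] conjI allI impI)
      fix x assume x: "0 \<le> x \<and> x \<noteq> t \<and> \<bar>x - t\<bar> < d"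
      then have "\<forall>i\<in>V. h i x < c + \<epsilon>" using d(2) unfolding dist_real_def by simp
      then show "\<not> bad x" unfolding bad_def by (simp add: not_le)
    qed (rule d(1))
  qed
  have badT: "bad T"
  proof (rule ccontr)
    assume nb: "\<not> bad T"
    obtain d where d: "d > 0" "\<forall>x. 0 \<le> x \<and> x \<noteq> T \<and> \<bar>x - T\<bar> < d \<longrightarrow> \<not> bad x"
      using notS_near[OF T0 nb] by blast
    have "T + d \<le> T" unfolding T_def[symmetric, THEN sym] T_def
    proof (rule cInf_greatest[OF Sne])
      fix s assume s: "s \<in> S"
      have "T \<le> s" by (rule F1[OF s])
      show "Inf S + d \<le> s"
      proof (rule ccontr)
        assume "\<not> Inf S + d \<le> s"
        then have "s < T + d" unfolding T_def by simp
        moreover have "s \<noteq> T" using nb s unfolding S_def by auto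
        ultimately have "0 \<le> s \<and> s \<noteq> T \<and> \<bar>s - T\<bar> < d" using s \<open>T \<le> s\<close> T0 by auto
        then have "\<not> bad s" using d(2) by blast
        then show False using s unfolding S_def by simp
      qed
    qed
    with d(1) show False by simp
  qed
  have Tpos: "T > 0"
  proof (rule ccontr)
    assume "\<not> T > 0"
    then have "T = 0" using T0 by simp
    with badT obtain i where "i \<in> V" "h i 0 \<ge> c + \<epsilon>" unfolding bad_def by auto
    with init[of i] eps show False unfolding h_def by simp
  qed
  from badT obtain i where i: "i \<in> V" "h i T \<ge> c + \<epsilon>" unfolding bad_def by auto
  have below: "h k T \<le> c + \<epsilon>" if k: "k \<in> V" for k
  proof (rule ccontr)
    assume "\<not> h k T \<le> c + \<epsilon>"
    then have "c + \<epsilon> < h k T" by simp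
    from order_tendstoD(1)[OF hcont[OF k T0] this] obtain d where
      d: "d > 0" "\<forall>x\<in>{0..}. x \<noteq> T \<and> dist x T < d \<longrightarrow> c + \<epsilon> < h k x"
      unfolding eventually_at by blast
    define x where "x = T - min d T / 2"
    have x: "0 \<le> x" "x \<noteq> T" "dist x T < d" "x < T" using d(1) Tpos unfolding x_def dist_real_def by auto
    then have "c + \<epsilon> < h k x" using d(2) by auto
    then have "bad x" unfolding bad_def using k by (intro bexI[of _ k]) auto
    then have "x \<in> S" unfolding S_def using x by simp
    from F1[OF this] x(4) show False by linarith
  qed
  have mx: "\<forall>j\<in>V. w T j \<le> w T i"
  proof
    fix j assume "j \<in> V"
    from below[OF this] i(2) have "w T j - \<epsilon> * T \<le> w T i - \<epsilon> * T" unfolding h_def by linarith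
    then show "w T j \<le> w T i" by linarith
  qed
  have FT: "F (w T) i - \<epsilon> < 0" using Fmax[OF T0 i(1) mx] eps by linarith
  have "T \<in> interior {0..}" using Tpos by simp
  then have eqat: "at T within {0..} = at T" by (rule at_within_interior)
  have "(h i has_real_derivative (F (w T) i - \<epsilon>)) (at T)"
    using hder[OF i(1) T0] unfolding eqat .
  from DERIV_neg_dec_left[OF this FT] obtain d where d: "d > 0" "\<forall>e>0. e < d \<longrightarrow> h i T < h i (T - e)" by blast
  define x where "x = T - min d T / 2"
  have x: "0 \<le> x" "x < T" using d(1) Tpos unfolding x_def by auto
  have "h i T < h i x" unfolding x_def using d Tpos by (intro d(2)[rule_format]) auto
  then have "bad x" unfolding bad_def using i by (intro bexI[of _ i]) auto
  then have "x \<in> S" unfolding S_def using x by simp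
  from F1[OF this] x(2) show False by linarith
qed

lemma ode_upper:
  fixes w :: "real \<Rightarrow> nat \<Rightarrow> real" and F :: "(nat \<Rightarrow> real) \<Rightarrow> nat \<Rightarrow> real" and V :: "nat set"
  assumes finV: "finite V"
    and Fmax: "\<And>t i. t \<ge> 0 \<Longrightarrow> i \<in> V \<Longrightarrow> (\<forall>j\<in>V. w t j \<le> w t i) \<Longrightarrow> F (w t) i \<le> 0"
    and der: "\<And>i t. i \<in> V \<Longrightarrow> t \<ge> 0 \<Longrightarrow> ((\<lambda>s. w s i) has_real_derivative F (w t) i) (at t within {0..})"
    and init: "\<And>i. i \<in> V \<Longrightarrow> w 0 i \<le> c"
    and t: "t \<ge> 0" and i: "i \<in> V"
  shows "w t i \<le> c"
proof (rule field_le_epsilon)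
  fix e :: real assume e: "e > 0"
  define \<epsilon> where "\<epsilon> = e / (1 + t)"
  have ep: "\<epsilon> > 0" unfolding \<epsilon>_def using e t by simp
  have "w t i - \<epsilon> * t < c + \<epsilon>" using ode_upper_eps[OF finV Fmax der init ep] t i by blast
  moreover have "\<epsilon> * t + \<epsilon> = \<epsilon> * (1 + t)" by (simp add: algebra_simps)
  moreover have "\<epsilon> * (1 + t) = e" unfolding \<epsilon>_def using t by simp
  ultimately show "w t i \<le> c + e" by linarith
qed


context wgraph begin

lemma coef_nonneg:
  assumes C: "classC r \<gamma> n \<omega>" and g: "\<gamma> \<ge> 0" and i: "i \<in> Vset n" and j: "j \<in> Vset n" and ij: "j \<noteq> i"
  shows "0 \<le> deg n \<omega> i powr (-r) * \<omega> i j + \<gamma> * deg n \<omega> j powr r / vol r n \<omega> * fvec r n \<omega> j i"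
proof (cases "\<gamma> = 0")
  case True
  then show ?thesis using wnn[of i j] by simp
next
  case False
  then have C0: "classC0 r n \<omega>" and
    C1: "\<omega> i j = 0 \<or> deg n \<omega> i powr (-r) * \<omega> i j + \<gamma> * deg n \<omega> j powr r / vol r n \<omega> * fvec r n \<omega> j i > 0"
    using C i j ij unfolding classC_def by auto
  show ?thesis
  proof (cases "\<omega> i j = 0")
    case True
    have "\<omega> i j > 0 \<or> fvec r n \<omega> j i \<ge> 0" using C0 i j ij unfolding classC0_def by auto
    with True have f: "fvec r n \<omega> j i \<ge> 0" by simp
    have "0 \<le> \<gamma> * deg n \<omega> j powr r / vol r n \<omega>" using g vol_pos by simp
    then have "0 \<le> \<gamma> * deg n \<omega> j powr r / vol r n \<omega> * fvec r n \<omega> j i" using f by (rule mult_nonneg_nonneg)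
    then show ?thesis using True by simp
  next
    case False
    then show ?thesis using C1 by simp
  qed
qed

lemma Lop_max:
  assumes C: "classC r \<gamma> n \<omega>" and g: "\<gamma> \<ge> 0" and i: "i \<in> Vset n" and mx: "\<forall>j\<in>Vset n. u j \<le> u i"
  shows "Lop r \<gamma> n \<omega> u i \<ge> 0"
  unfolding Lop_formula[OF i]
proof (rule sum_nonneg)
  fix j assume j: "j \<in> Vset n"
  show "0 \<le> (u i - u j) * (deg n \<omega> i powr (-r) * \<omega> i j + \<gamma> * deg n \<omega> j powr r / vol r n \<omega> * fvec r n \<omega> j i)"
  proof (cases "j = i")
    case True then show ?thesis by simp
  next
    case False
    show ?thesis using coef_nonneg[OF C g i j False] mx j by (intro mult_nonneg_nonneg) auto
  qed
qed

lemma Lop_min: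
  assumes C: "classC r \<gamma> n \<omega>" and g: "\<gamma> \<ge> 0" and i: "i \<in> Vset n" and mn: "\<forall>j\<in>Vset n. u i \<le> u j"
  shows "Lop r \<gamma> n \<omega> u i \<le> 0"
  unfolding Lop_formula[OF i]
proof (rule sum_nonpos)
  fix j assume j: "j \<in> Vset n"
  show "(u i - u j) * (deg n \<omega> i powr (-r) * \<omega> i j + \<gamma> * deg n \<omega> j powr r / vol r n \<omega> * fvec r n \<omega> j i) \<le> 0"
  proof (cases "j = i")
    case True then show ?thesis by simp
  next
    case False
    show ?thesis using coef_nonneg[OF C g i j False] mn j by (intro mult_nonpos_nonneg) auto
  qed
qed

end

lemma classC_graph: "classC r \<gamma> n \<omega> \<Longrightarrow> is_graph n \<omega>"
  unfolding classC_def classC0_def by (auto split: if_splits)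

theorem corollary6p28:
  fixes r \<gamma> c1 c2 :: real and n :: nat and \<omega> :: "nat \<Rightarrow> nat \<Rightarrow> real"
    and w :: "real \<Rightarrow> nat \<Rightarrow> real" and w0 :: "nat \<Rightarrow> real"
  assumes "0 \<le> r" "r \<le> 1" "\<gamma> \<ge> 0"
    and "classC r \<gamma> n \<omega>"
    and "\<And>i. i \<in> Vset n \<Longrightarrow> w 0 i = w0 i"
    and "\<And>i t. i \<in> Vset n \<Longrightarrow> t \<ge> 0 \<Longrightarrow>
           ((\<lambda>s. w s i) has_real_derivative (- Lop r \<gamma> n \<omega> (w t) i)) (at t within {0..})"
    and "\<And>i. i \<in> Vset n \<Longrightarrow> c1 \<le> w0 i \<and> w0 i \<le> c2"
  shows "(\<forall>t\<ge>0. \<forall>i\<in>Vset n. c1 \<le> w t i \<and> w t i \<le> c2)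
         \<and> (\<forall>t\<ge>0. supnorm n (w t) \<le> supnorm n w0)"
proof -
  note C = assms(4) and g = assms(3) and w00 = assms(5) and der = assms(6)
  interpret wgraph n \<omega> r by unfold_locales (rule classC_graph[OF C])
  have upper: "w t i \<le> c" if "\<And>i. i \<in> Vset n \<Longrightarrow> w0 i \<le> c" "t \<ge> 0" "i \<in> Vset n" for c t i
  proof (rule ode_upper[OF finV, of w "\<lambda>u i. - Lop r \<gamma> n \<omega> u i"])
    show "- Lop r \<gamma> n \<omega> (w t) i \<le> 0" if "t \<ge> 0" "i \<in> Vset n" "\<forall>j\<in>Vset n. w t j \<le> w t i" for t i
      using Lop_max[OF C g that(2,3)] by simp
    show "((\<lambda>s. w s i) has_real_derivative - Lop r \<gamma> n \<omega> (w t) i) (at t within {0..})"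
      if "i \<in> Vset n" "t \<ge> 0" for i t using der[OF that] .
    show "w 0 i \<le> c" if "i \<in> Vset n" for i using w00[OF that] \<open>\<And>i. i \<in> Vset n \<Longrightarrow> w0 i \<le> c\<close>[OF that] by simp
  qed (use that in auto)
  have lower: "c \<le> w t i" if "\<And>i. i \<in> Vset n \<Longrightarrow> c \<le> w0 i" "t \<ge> 0" "i \<in> Vset n" for c t i
  proof -
    have "(\<lambda>s k. - w s k) t i \<le> - c"
    proof (rule ode_upper[OF finV, of "\<lambda>s k. - w s k" "\<lambda>u i. Lop r \<gamma> n \<omega> (\<lambda>k. - u k) i"])
      show "Lop r \<gamma> n \<omega> (\<lambda>k. - (\<lambda>s k. - w s k) t k) i \<le> 0"
        if "t \<ge> 0" "i \<in> Vset n" "\<forall>j\<in>Vset n. (\<lambda>s k. - w s k) t j \<le> (\<lambda>s k. - w s k) t i" for t i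
      proof -
        have e: "(\<lambda>k. - (\<lambda>s k. - w s k) t k) = w t" by (simp add: fun_eq_iff)
        have "\<forall>j\<in>Vset n. w t i \<le> w t j" using that(3) by simp
        then show ?thesis unfolding e using Lop_min[OF C g that(2)] by simp
      qed
      show "((\<lambda>s. (\<lambda>s k. - w s k) s i) has_real_derivative Lop r \<gamma> n \<omega> (\<lambda>k. - (\<lambda>s k. - w s k) t k) i) (at t within {0..})"
        if "i \<in> Vset n" "t \<ge> 0" for i t
      proof -
        have e: "(\<lambda>k. - (\<lambda>s k. - w s k) t k) = w t" by (simp add: fun_eq_iff)
        show ?thesis unfolding e using DERIV_minus[OF der[OF that]] by simp
      qed
      show "(\<lambda>s k. - w s k) 0 i \<le> - c" if "i \<in> Vset n" for i
        using w00[OF that] \<open>\<And>i. i \<in> Vset n \<Longrightarrow> c \<le> w0 i\<close>[OF that] by simp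
    qed (use that in auto)
    then show ?thesis by simp
  qed
  have part1: "\<forall>t\<ge>0. \<forall>i\<in>Vset n. c1 \<le> w t i \<and> w t i \<le> c2"
    using upper[of c2] lower[of c1] assms(7) by blast
  have part2: "supnorm n (w t) \<le> supnorm n w0" if t: "t \<ge> 0" for t
  proof -
    define N where "N = supnorm n w0"
    have bnd: "\<bar>w0 i\<bar> \<le> N" if "i \<in> Vset n" for i
      unfolding N_def supnorm_def using finV that by (intro Max_ge) auto
    have "\<bar>w t i\<bar> \<le> N" if i: "i \<in> Vset n" for i
    proof -
      have "w t i \<le> N" by (rule upper[OF _ t i]) (use bnd in force)
      moreover have "- N \<le> w t i" by (rule lower[OF _ t i]) (use bnd in force)
      ultimately show ?thesis by simp
    qed
    then have "Max ((\<lambda>i. \<bar>w t i\<bar>) ` Vset n) \<le> N" using finV Vne by (subst Max_le_iff) auto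
    then show ?thesis unfolding supnorm_def[of n "w t"] N_def .
  qed
  show ?thesis using part1 part2 by blast
qed

end
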